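(* Let ${\bf p}=({\bf p}_1,\dots,{\bf p}_n)$ and ${\bf q}=({\bf q}_1,\dots,{\bf q}_m)$ be configurations in $\mathbb R^d$. Suppose there are subconfigurations ${\bf p}'\subset{\bf p}$ and ${\bf q}'\subset{\bf q}$ such that the combined set of points of $({\bf p}',{\bf q}')$ is in quadric general position in $\mathbb R^d$ and there is no quadric strictly separating ${\bf p}'$ and ${\bf q}'$. Then $(K(n,m),{\bf p},{\bf q})$ is super stable, $n+m\ge (d+1)(d+2)/2+1$, and the affine span of ${\bf p}$ equals the affine span of ${\bf q}$, which is all of $\mathbb R^d$.
   Context: For ${\bf x}\in\mathbb R^d$, $\hat{\bf x}\in\mathbb R^{d+1}$ is ${\bf x}$ with a $1$ appended; $\mathcal M_d$ is the space of symmetric $(d+1)\times(d+1)$ matrices and $\mathcal V({\bf x})=\hat{\bf x}\hat{\bf x}^t\in\mathcal M_d$. A configuration in $\mathbb R^d$ is in quadric general position if every $k+1$ of the points $\mathcal V({\bf x})$ ($\bf x$ in the configuration) span a $k$-dimensional affine subspace of $\mathcal M_d$, for $k=1,\dots,(d+1)(d+2)/2-1$. Point sets are strictly separated by a quadric if there is a symmetric $(d+1)\times(d+1)$ matrix $A$ with $\hat{\bf b}^tA\hat{\bf b}<0<\hat{\bf a}^tA\hat{\bf a}$ for all ${\bf a}$ in the first set and ${\bf b}$ in the second. $(K(n,m),{\bf p},{\bf q})$ is the framework with bars joining ${\bf p}_i$ to ${\bf q}_j$ for all $i,j$ ($N=n+m$ vertices). An equilibrium stress assigns scalars $\omega_{ij}=\omega_{ji}$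 to bars with $\sum_i\omega_{ij}({\bf p}_i-{\bf p}_j)=0$ at every vertex $j$; its stress matrix has off-diagonal entries $-\omega_{ij}$ (zero on non-edges) and zero row sums. A framework with affine span $\mathbb R^d$ is super stable if it has an equilibrium stress with positive semidefinite stress matrix of rank $N-d-1$ and its bar vectors do not lie on a conic at infinity (i.e. there is no nonzero symmetric $d\times d$ matrix $Q$ with ${\bf v}^tQ{\bf v}=0$ for every bar vector ${\bf v}$). *)

theory Defs
  imports "HOL-Analysis.Analysis"
begin

text \<open>Points of R^d are vectors of type real^'d (d = CARD('d)).
  hat x in R^(d+1) is x with a 1 appended; the extra coordinate is the index None
  of the index type 'd option.\<close>

definition hat :: "real^'d \<Rightarrow> real^('d option)" where
  "hat x = (\<chi> i. case i of None \<Rightarrow> 1 | Some j \<Rightarrow> x $ j)"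

definition VV :: "real^'d \<Rightarrow> real^('d option)^('d option)" where
  "VV x = (\<chi> i j. hat x $ i * hat x $ j)"

definition dimM :: "nat \<Rightarrow> nat" where
  "dimM d = (d + 1) * (d + 2) div 2"

definition quadric_general_position :: "('i \<Rightarrow> real^'d) \<Rightarrow> 'i set \<Rightarrow> bool" where
  "quadric_general_position f S \<longleftrightarrow>
     (\<forall>T k. T \<subseteq> S \<and> finite T \<and> card T = k + 1 \<and> 1 \<le> k \<and> k \<le> dimM CARD('d) - 1
        \<longrightarrow> aff_dim (VV ` f ` T) = int k)"

definition strictly_separated_by_quadric :: "(real^'d) set \<Rightarrow> (real^'d) set \<Rightarrow> bool" where
  "strictly_separated_by_quadric A B \<longleftrightarrow>
     (\<exists>M :: real^('d option)^('d option). transpose M = M \<and>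
        (\<forall>a\<in>A. 0 < hat a \<bullet> (M *v hat a)) \<and> (\<forall>b\<in>B. hat b \<bullet> (M *v hat b) < 0))"

definition equilibrium_stress ::
  "('v::finite \<Rightarrow> 'v \<Rightarrow> bool) \<Rightarrow> ('v \<Rightarrow> real^'d) \<Rightarrow> ('v \<Rightarrow> 'v \<Rightarrow> real) \<Rightarrow> bool" where
  "equilibrium_stress E r w \<longleftrightarrow>
     (\<forall>i j. w i j = w j i) \<and> (\<forall>i j. \<not> E i j \<longrightarrow> w i j = 0) \<and>
     (\<forall>j. (\<Sum>i\<in>UNIV. w i j *\<^sub>R (r i - r j)) = 0)"

definition stress_matrix :: "('v::finite \<Rightarrow> 'v \<Rightarrow> real) \<Rightarrow> real^'v^'v" where
  "stress_matrix w = (\<chi> i j. if i = j then (\<Sum>k\<in>UNIV - {i}. w i k) else - w i j)"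

definition psd :: "real^'n^'n \<Rightarrow> bool" where
  "psd M \<longleftrightarrow> (\<forall>x. 0 \<le> x \<bullet> (M *v x))"

definition bar_vectors :: "('v \<Rightarrow> 'v \<Rightarrow> bool) \<Rightarrow> ('v \<Rightarrow> real^'d) \<Rightarrow> (real^'d) set" where
  "bar_vectors E r = {r i - r j | i j. E i j}"

definition on_conic_at_infinity :: "(real^'d) set \<Rightarrow> bool" where
  "on_conic_at_infinity X \<longleftrightarrow>
     (\<exists>Q :: real^'d^'d. Q \<noteq> 0 \<and> transpose Q = Q \<and> (\<forall>v\<in>X. v \<bullet> (Q *v v) = 0))"

definition super_stable :: "('v::finite \<Rightarrow> 'v \<Rightarrow> bool) \<Rightarrow> ('v \<Rightarrow> real^'d) \<Rightarrow> bool" where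
  "super_stable E r \<longleftrightarrow>
     affine hull (range r) = UNIV \<and>
     (\<exists>w. equilibrium_stress E r w \<and> psd (stress_matrix w) \<and>
          rank (stress_matrix w) = CARD('v) - CARD('d) - 1) \<and>
     \<not> on_conic_at_infinity (bar_vectors E r)"

text \<open>Complete bipartite graph K(n,m) on vertex type 'a + 'b
  (vertices Inl i are the p_i, vertices Inr j are the q_j).\<close>
fun Kbip :: "('a + 'b) \<Rightarrow> ('a + 'b) \<Rightarrow> bool" where
  "Kbip (Inl _) (Inr _) = True"
| "Kbip (Inr _) (Inl _) = True"
| "Kbip _ _ = False"

definition bip_config :: "('a \<Rightarrow> real^'d) \<Rightarrow> ('b \<Rightarrow> real^'d) \<Rightarrow> ('a + 'b) \<Rightarrow> real^'d" where
  "bip_config p q = case_sum p q"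

end

theory Submission
  imports Defs
begin


lemma hat_None[simp]: "hat x $ None = 1" by (simp add: hat_def)
lemma hat_Some[simp]: "hat x $ Some j = x $ j" by (simp add: hat_def)
lemma VV_nth[simp]: "VV x $ i $ j = hat x $ i * hat x $ j" by (simp add: VV_def)

lemma sum_option: "(\<Sum>i\<in>UNIV. g i) = g None + (\<Sum>j\<in>UNIV. g (Some j))"
  for g :: "'d::finite option \<Rightarrow> 'c::comm_monoid_add"
  by (simp add: UNIV_option_conv sum.reindex)

lemma inner_hat: "z \<bullet> hat x = z $ None + (\<Sum>j\<in>UNIV. z $ Some j * x $ j)"
  by (simp add: inner_vec_def sum_option)

lemma VV_mult: "VV x *v z = (hat x \<bullet> z) *\<^sub>R hat x"
  by (simp add: vec_eq_iff matrix_vector_mult_def inner_vec_def sum_distrib_left mult_ac)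

lemma sum_mat_mult:
  fixes M :: "'i \<Rightarrow> real^'n^'m"
  assumes "finite S"
  shows "(\<Sum>i\<in>S. c i *\<^sub>R M i) *v z = (\<Sum>i\<in>S. c i *\<^sub>R (M i *v z))"
  using assms
  by (induction S rule: finite_induct)
     (simp_all add: matrix_vector_mult_add_rdistrib scaleR_matrix_vector_assoc)

lemma hat_zero: "(\<And>x. z \<bullet> hat x = 0) \<Longrightarrow> z = 0"
proof -
  assume h: "\<And>x. z \<bullet> hat x = 0"
  have n: "z $ None = 0" using h[of 0] by (simp add: inner_hat)
  have s: "z $ Some j = 0" for j
  proof -
    have "(\<Sum>k\<in>UNIV. z $ Some k * axis j 1 $ k) = z $ Some j"
      by (simp add: axis_def if_distrib[of "\<lambda>t. z $ Some _ * t"] cong: if_cong)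
    then show ?thesis using h[of "axis j 1"] n by (simp add: inner_hat)
  qed
  show "z = 0" unfolding vec_eq_iff by (metis n s not_Some_eq zero_index)
qed

lemma inner_sym:
  fixes A :: "real^'n^'n"
  assumes "transpose A = A"
  shows "x \<bullet> (A *v y) = (A *v x) \<bullet> y"
proof -
  have "x \<bullet> (A *v y) = y \<bullet> (x v* A)"
    by (simp add: inner_vec_def matrix_vector_mult_def vector_matrix_mult_def sum_distrib_left sum_distrib_right mult_ac)
       (rule sum.swap)
  also have "x v* A = A *v x" by (metis assms vector_transpose_matrix)
  finally show ?thesis by (simp add: inner_commute)
qed

lemma quad_VV: "hat x \<bullet> (M *v hat x) = M \<bullet> VV x"
  by (simp add: inner_vec_def matrix_vector_mult_def sum_distrib_left mult_ac)



lemma mat_mult_sum: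
  fixes A :: "real^'n^'m"
  assumes "finite S"
  shows "A *v (\<Sum>i\<in>S. c i *\<^sub>R v i) = (\<Sum>i\<in>S. c i *\<^sub>R (A *v v i))"
  using assms
  by (induction S rule: finite_induct)
     (simp_all add: matrix_vector_right_distrib matrix_vector_mult_scaleR)

lemma hat_comb:
  assumes "(\<Sum>j\<in>S. c j *\<^sub>R hat (x j)) = hat y"
  shows "sum c S = 1 \<and> (\<Sum>j\<in>S. c j *\<^sub>R x j) = y"
proof
  show "sum c S = 1" using arg_cong[OF assms, of "\<lambda>v. v $ None"] by simp
  show "(\<Sum>j\<in>S. c j *\<^sub>R x j) = y"
  proof (rule vec_eq_iff[THEN iffD2], rule allI)
    fix l
    show "(\<Sum>j\<in>S. c j *\<^sub>R x j) $ l = y $ l"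
      using arg_cong[OF assms, of "\<lambda>v. v $ Some l"] by simp
  qed
qed

locale posdep =
  fixes p :: "'a::finite \<Rightarrow> real^'d" and q :: "'b::finite \<Rightarrow> real^'d"
    and \<alpha> :: "'a \<Rightarrow> real" and \<beta> :: "'b \<Rightarrow> real"
  assumes apos: "\<And>i. 0 < \<alpha> i" and bpos: "\<And>j. 0 < \<beta> j"
    and dep: "(\<Sum>i\<in>UNIV. \<alpha> i *\<^sub>R VV (p i)) = (\<Sum>j\<in>UNIV. \<beta> j *\<^sub>R VV (q j))"
    and spanning: "\<And>z. (\<And>u. z \<bullet> hat (bip_config p q u) = 0) \<Longrightarrow> z = 0"
begin

definition G where "G = (\<Sum>i\<in>UNIV. \<alpha> i *\<^sub>R VV (p i))"

lemma G_p: "G *v z = (\<Sum>i\<in>UNIV. (\<alpha> i * (hat (p i) \<bullet> z)) *\<^sub>R hat (p i))"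
  unfolding G_def by (simp add: sum_mat_mult VV_mult)

lemma G_q: "G *v z = (\<Sum>j\<in>UNIV. (\<beta> j * (hat (q j) \<bullet> z)) *\<^sub>R hat (q j))"
  unfolding G_def dep by (simp add: sum_mat_mult VV_mult)

lemma G_quad_p: "z \<bullet> (G *v z) = (\<Sum>i\<in>UNIV. \<alpha> i * (hat (p i) \<bullet> z)^2)"
  by (simp add: G_p inner_sum_right power2_eq_square inner_commute mult_ac)

lemma G_quad_q: "z \<bullet> (G *v z) = (\<Sum>j\<in>UNIV. \<beta> j * (hat (q j) \<bullet> z)^2)"
  by (simp add: G_q inner_sum_right power2_eq_square inner_commute mult_ac)

lemma G_sym: "x \<bullet> (G *v y) = (G *v x) \<bullet> y"
  by (simp add: G_p inner_sum_right inner_sum_left inner_commute mult_ac)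

lemma span_pq:
  assumes "\<And>i. z \<bullet> hat (p i) = 0" "\<And>j. z \<bullet> hat (q j) = 0"
  shows "z = 0"
proof (rule spanning)
  fix u show "z \<bullet> hat (bip_config p q u) = 0"
    using assms by (cases u) (auto simp: bip_config_def)
qed

lemma zero_p: "z \<bullet> (G *v z) = 0 \<Longrightarrow> hat (p i) \<bullet> z = 0"
proof -
  assume "z \<bullet> (G *v z) = 0"
  then have "(\<Sum>i\<in>UNIV. \<alpha> i * (hat (p i) \<bullet> z)^2) = 0" by (simp add: G_quad_p)
  then have "\<forall>i\<in>UNIV. \<alpha> i * (hat (p i) \<bullet> z)^2 = 0"
    by (subst (asm) sum_nonneg_eq_0_iff) (auto intro!: mult_nonneg_nonneg simp: less_imp_le[OF apos])
  then show ?thesis using apos[of i] by (metis less_irrefl mult_eq_0_iff zero_eq_power2 UNIV_I)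
qed

lemma zero_q: "z \<bullet> (G *v z) = 0 \<Longrightarrow> hat (q j) \<bullet> z = 0"
proof -
  assume "z \<bullet> (G *v z) = 0"
  then have "(\<Sum>j\<in>UNIV. \<beta> j * (hat (q j) \<bullet> z)^2) = 0" by (simp add: G_quad_q)
  then have "\<forall>j\<in>UNIV. \<beta> j * (hat (q j) \<bullet> z)^2 = 0"
    by (subst (asm) sum_nonneg_eq_0_iff) (auto intro!: mult_nonneg_nonneg simp: less_imp_le[OF bpos])
  then show ?thesis using bpos[of j] by (metis less_irrefl mult_eq_0_iff zero_eq_power2 UNIV_I)
qed

lemma span_p: "(\<And>i. z \<bullet> hat (p i) = 0) \<Longrightarrow> z = 0"
proof -
  assume h: "\<And>i. z \<bullet> hat (p i) = 0"
  have "z \<bullet> (G *v z) = 0" using h by (simp add: G_quad_p inner_commute)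
  then show "z = 0" using h zero_q by (intro span_pq) (auto simp: inner_commute)
qed

lemma span_q: "(\<And>j. z \<bullet> hat (q j) = 0) \<Longrightarrow> z = 0"
proof -
  assume h: "\<And>j. z \<bullet> hat (q j) = 0"
  have "z \<bullet> (G *v z) = 0" using h by (simp add: G_quad_q inner_commute)
  then show "z = 0" using h zero_p by (intro span_pq) (auto simp: inner_commute)
qed

lemma G_inj: "G *v z = 0 \<Longrightarrow> z = 0"
  using zero_p span_p by (metis inner_commute inner_zero_right)

definition H where "H = matrix_inv G"

lemma GH: "G ** H = mat 1 \<and> H ** G = mat 1"
proof -
  have "invertible G"
    using G_inj by (simp add: invertible_left_inverse matrix_left_invertible_ker)
  then show ?thesis unfolding H_def matrix_inv_def invertible_def by (rule someI_ex)
qed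

lemma GHv[simp]: "G *v (H *v y) = y"
  by (simp add: matrix_vector_mul_assoc GH)

lemma HGv[simp]: "H *v (G *v y) = y"
  by (simp add: matrix_vector_mul_assoc GH)

lemma H_sym: "x \<bullet> (H *v y) = (H *v x) \<bullet> y"
proof -
  have "x \<bullet> (H *v y) = (G *v (H *v x)) \<bullet> (H *v y)" by simp
  also have "\<dots> = (H *v x) \<bullet> (G *v (H *v y))" by (rule G_sym[symmetric])
  also have "\<dots> = (H *v x) \<bullet> y" by simp
  finally show ?thesis .
qed

definition k where "k i j = hat (p i) \<bullet> (H *v hat (q j))"

lemma k_sym: "hat (q j) \<bullet> (H *v hat (p i)) = k i j"
  unfolding k_def by (metis H_sym inner_commute)

lemma K1: "(\<Sum>j\<in>UNIV. (\<beta> j * k i j) *\<^sub>R hat (q j)) = hat (p i)"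
proof -
  have "hat (p i) = G *v (H *v hat (p i))" by simp
  also have "\<dots> = (\<Sum>j\<in>UNIV. (\<beta> j * (hat (q j) \<bullet> (H *v hat (p i)))) *\<^sub>R hat (q j))"
    by (rule G_q)
  also have "\<dots> = (\<Sum>j\<in>UNIV. (\<beta> j * k i j) *\<^sub>R hat (q j))"
    by (simp only: k_sym)
  finally show ?thesis by simp
qed

lemma K2: "(\<Sum>i\<in>UNIV. (\<alpha> i * k i j) *\<^sub>R hat (p i)) = hat (q j)"
proof -
  have "hat (q j) = G *v (H *v hat (q j))" by simp
  also have "\<dots> = (\<Sum>i\<in>UNIV. (\<alpha> i * k i j) *\<^sub>R hat (p i))"
    by (simp only: G_p k_def)
  finally show ?thesis by simp
qed

lemma K1a: "(\<Sum>j\<in>UNIV. \<beta> j * k i j) = 1" and K1b: "(\<Sum>j\<in>UNIV. (\<beta> j * k i j) *\<^sub>R q j) = p i"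
  using hat_comb[OF K1] by auto

lemma K2a: "(\<Sum>i\<in>UNIV. \<alpha> i * k i j) = 1" and K2b: "(\<Sum>i\<in>UNIV. (\<alpha> i * k i j) *\<^sub>R p i) = q j"
  using hat_comb[OF K2] by auto

end


lemma sum_UNIV_sum:
  "(\<Sum>u\<in>(UNIV::('a::finite + 'b::finite) set). g u) = (\<Sum>i\<in>UNIV. g (Inl i)) + (\<Sum>j\<in>UNIV. g (Inr j))"
proof -
  have e: "(UNIV::('a + 'b) set) = UNIV <+> UNIV" by simp
  show ?thesis unfolding e by (simp only: sum.Plus[OF finite finite] comp_def)
qed

lemma bip_Inl[simp]: "bip_config p q (Inl i) = p i" and bip_Inr[simp]: "bip_config p q (Inr j) = q j"
  by (simp_all add: bip_config_def)

context posdep begin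

definition w :: "('a + 'b) \<Rightarrow> ('a + 'b) \<Rightarrow> real" where
  "w u v = (case (u, v) of (Inl i, Inr j) \<Rightarrow> \<alpha> i * \<beta> j * k i j
                        | (Inr j, Inl i) \<Rightarrow> \<alpha> i * \<beta> j * k i j | _ \<Rightarrow> 0)"

lemma w_simps[simp]: "w (Inl i) (Inr j) = \<alpha> i * \<beta> j * k i j" "w (Inr j) (Inl i) = \<alpha> i * \<beta> j * k i j"
  "w (Inl i) (Inl i') = 0" "w (Inr j) (Inr j') = 0"
  by (simp_all add: w_def)

lemma w_sym: "w u v = w v u"
  by (cases u; cases v) simp_all

lemma w_diag: "w u u = 0" by (cases u) simp_all

definition \<gamma> :: "('a + 'b) \<Rightarrow> real" where "\<gamma> = case_sum \<alpha> \<beta>"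

lemma gamma_simps[simp]: "\<gamma> (Inl i) = \<alpha> i" "\<gamma> (Inr j) = \<beta> j" by (simp_all add: \<gamma>_def)

lemma gamma_pos: "0 < \<gamma> u" by (cases u) (simp_all add: apos bpos)

lemma w_row: "(\<Sum>v\<in>UNIV. w u v) = \<gamma> u"
proof (cases u)
  case (Inl i)
  have "(\<Sum>j\<in>UNIV. \<alpha> i * \<beta> j * k i j) = \<alpha> i * (\<Sum>j\<in>UNIV. \<beta> j * k i j)"
    by (simp add: sum_distrib_left mult_ac)
  then show ?thesis using Inl by (simp add: sum_UNIV_sum K1a)
next
  case (Inr j)
  have "(\<Sum>i\<in>UNIV. \<alpha> i * \<beta> j * k i j) = \<beta> j * (\<Sum>i\<in>UNIV. \<alpha> i * k i j)"
    by (simp add: sum_distrib_left mult_ac)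
  then show ?thesis using Inr by (simp add: sum_UNIV_sum K2a)
qed

lemma equil: "equilibrium_stress Kbip (bip_config p q) w"
  unfolding equilibrium_stress_def
proof (intro conjI allI impI)
  fix i j :: "'a + 'b" show "w i j = w j i" by (rule w_sym)
next
  fix u v :: "'a + 'b" assume "\<not> Kbip u v" then show "w u v = 0"
    by (cases u; cases v) simp_all
next
  fix v :: "'a + 'b"
  show "(\<Sum>u\<in>UNIV. w u v *\<^sub>R (bip_config p q u - bip_config p q v)) = 0"
  proof (cases v)
    case (Inl i)
    have "(\<Sum>j\<in>UNIV. (\<alpha> i * \<beta> j * k i j) *\<^sub>R (q j - p i))
        = \<alpha> i *\<^sub>R (\<Sum>j\<in>UNIV. (\<beta> j * k i j) *\<^sub>R q j) - (\<alpha> i * (\<Sum>j\<in>UNIV. \<beta> j * k i j)) *\<^sub>R p i"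
      by (simp add: scaleR_right_diff_distrib sum_subtractf scaleR_sum_right sum_distrib_left
          scaleR_sum_left mult_ac)
    also have "\<dots> = 0" by (simp add: K1a K1b)
    finally show ?thesis using Inl by (simp add: sum_UNIV_sum)
  next
    case (Inr j)
    have "(\<Sum>i\<in>UNIV. (\<alpha> i * \<beta> j * k i j) *\<^sub>R (p i - q j))
        = \<beta> j *\<^sub>R (\<Sum>i\<in>UNIV. (\<alpha> i * k i j) *\<^sub>R p i) - (\<beta> j * (\<Sum>i\<in>UNIV. \<alpha> i * k i j)) *\<^sub>R q j"
      by (simp add: scaleR_right_diff_distrib sum_subtractf scaleR_sum_right sum_distrib_left
          scaleR_sum_left mult_ac)
    also have "\<dots> = 0" by (simp add: K2a K2b)
    finally show ?thesis using Inr by (simp add: sum_UNIV_sum)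
  qed
qed

abbreviation "\<Omega> \<equiv> stress_matrix w"

lemma Om: "\<Omega> $ u $ v = (if u = v then \<gamma> u else 0) - w u v"
proof (cases "u = v")
  case True
  have "(\<Sum>k\<in>UNIV - {u}. w u k) = (\<Sum>k\<in>UNIV. w u k) - w u u" by (simp add: sum_diff1)
  then show ?thesis using True by (simp add: stress_matrix_def w_row w_diag)
qed (simp add: stress_matrix_def)

lemma Om_mult: "(\<Omega> *v x) $ u = \<gamma> u * x $ u - (\<Sum>v\<in>UNIV. w u v * x $ v)"
  by (simp add: matrix_vector_mult_def Om left_diff_distrib sum_subtractf if_distrib[of "\<lambda>t. t * _"] cong: if_cong)

lemma Om_sym: "transpose \<Omega> = \<Omega>"
  by (simp add: vec_eq_iff transpose_def Om w_sym)

end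


context posdep begin

lemma Om_quad: "x \<bullet> (\<Omega> *v x) = (\<Sum>u\<in>UNIV. \<gamma> u * (x $ u)^2) - (\<Sum>u\<in>UNIV. \<Sum>v\<in>UNIV. w u v * x $ u * x $ v)"
  by (simp add: inner_vec_def Om_mult right_diff_distrib sum_subtractf sum_distrib_left power2_eq_square mult_ac)

definition bb :: "real^('a + 'b) \<Rightarrow> real^('d option)" where
  "bb x = (\<Sum>j\<in>UNIV. (\<beta> j * x $ Inr j) *\<^sub>R hat (q j))"

definition zz where "zz x = H *v bb x"

definition CC where "CC x = (\<Sum>i\<in>UNIV. \<Sum>j\<in>UNIV. \<alpha> i * \<beta> j * k i j * x $ Inl i * x $ Inr j)"

lemma F1: "(\<Sum>u\<in>UNIV. \<Sum>v\<in>UNIV. w u v * x $ u * x $ v) = 2 * CC x"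
proof -
  have "(\<Sum>j\<in>UNIV. \<Sum>i\<in>UNIV. \<alpha> i * \<beta> j * k i j * x $ Inr j * x $ Inl i) = CC x"
    unfolding CC_def by (subst sum.swap) (simp add: mult_ac)
  then show ?thesis by (simp add: sum_UNIV_sum CC_def)
qed

lemma F2: "hat (p i) \<bullet> zz x = (\<Sum>j\<in>UNIV. \<beta> j * x $ Inr j * k i j)"
  by (simp add: zz_def bb_def mat_mult_sum inner_sum_right k_def)

lemma F3: "(\<Sum>i\<in>UNIV. \<alpha> i * x $ Inl i * (hat (p i) \<bullet> zz x)) = CC x"
  by (simp add: F2 CC_def sum_distrib_left mult_ac)

lemma F4: "(\<Sum>j\<in>UNIV. \<beta> j * x $ Inr j * (hat (q j) \<bullet> zz x)) = bb x \<bullet> zz x"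
  by (simp add: bb_def inner_sum_left)

lemma Gzz: "G *v zz x = bb x" by (simp add: zz_def)

lemma F5: "(\<Sum>i\<in>UNIV. \<alpha> i * (hat (p i) \<bullet> zz x)^2) = bb x \<bullet> zz x"
  using G_quad_p[of "zz x"] by (simp add: Gzz inner_commute)

lemma F6: "(\<Sum>j\<in>UNIV. \<beta> j * (hat (q j) \<bullet> zz x)^2) = bb x \<bullet> zz x"
  using G_quad_q[of "zz x"] by (simp add: Gzz inner_commute)

lemma SOS: "x \<bullet> (\<Omega> *v x) = (\<Sum>u\<in>UNIV. \<gamma> u * (x $ u - hat (bip_config p q u) \<bullet> zz x)^2)"
proof -
  let ?c = "\<lambda>u. hat (bip_config p q u) \<bullet> zz x"
  have "(\<Sum>u\<in>UNIV. \<gamma> u * (x $ u - ?c u)^2)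
      = (\<Sum>u\<in>UNIV. \<gamma> u * (x $ u)^2) - 2 * (\<Sum>u\<in>UNIV. \<gamma> u * x $ u * ?c u) + (\<Sum>u\<in>UNIV. \<gamma> u * (?c u)^2)"
    by (simp add: power2_diff algebra_simps sum.distrib sum_subtractf sum_distrib_left)
  also have "(\<Sum>u\<in>UNIV. \<gamma> u * x $ u * ?c u) = CC x + bb x \<bullet> zz x"
    by (simp add: sum_UNIV_sum F3 F4)
  also have "(\<Sum>u\<in>UNIV. \<gamma> u * (?c u)^2) = 2 * (bb x \<bullet> zz x)"
    by (simp add: sum_UNIV_sum F5 F6)
  finally show ?thesis by (simp add: Om_quad F1)
qed

lemma psd_Om: "psd \<Omega>"
  unfolding psd_def SOS
  by (auto intro!: sum_nonneg mult_nonneg_nonneg simp: less_imp_le[OF gamma_pos])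

definition L :: "real^'d option \<Rightarrow> real^('a + 'b)" where
  "L z = (\<chi> u. hat (bip_config p q u) \<bullet> z)"

lemma ker_L: "\<Omega> *v x = 0 \<Longrightarrow> x = L (zz x)"
proof -
  assume "\<Omega> *v x = 0"
  then have "(\<Sum>u\<in>UNIV. \<gamma> u * (x $ u - hat (bip_config p q u) \<bullet> zz x)^2) = 0"
    by (metis SOS inner_zero_right)
  then have "\<forall>u\<in>UNIV. \<gamma> u * (x $ u - hat (bip_config p q u) \<bullet> zz x)^2 = 0"
    by (subst (asm) sum_nonneg_eq_0_iff) (auto intro!: mult_nonneg_nonneg simp: less_imp_le[OF gamma_pos])
  then have "x $ u = hat (bip_config p q u) \<bullet> zz x" for u
    using gamma_pos[of u] by (metis UNIV_I less_irrefl mult_eq_0_iff right_minus_eq zero_eq_power2)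
  then show ?thesis by (simp add: vec_eq_iff L_def)
qed

lemma Om_L: "\<Omega> *v L z = 0"
proof (rule vec_eq_iff[THEN iffD2], rule allI)
  fix u :: "'a + 'b"
  show "(\<Omega> *v L z) $ u = 0 $ u"
  proof (cases u)
    case (Inl i)
    have "(\<Sum>j\<in>UNIV. \<alpha> i * \<beta> j * k i j * (hat (q j) \<bullet> z))
        = \<alpha> i * ((\<Sum>j\<in>UNIV. (\<beta> j * k i j) *\<^sub>R hat (q j)) \<bullet> z)"
      by (simp add: inner_sum_left sum_distrib_left mult_ac)
    also have "\<dots> = \<alpha> i * (hat (p i) \<bullet> z)" by (simp add: K1)
    finally show ?thesis using Inl by (simp add: Om_mult L_def sum_UNIV_sum)
  next
    case (Inr j)
    have "(\<Sum>i\<in>UNIV. \<alpha> i * \<beta> j * k i j * (hat (p i) \<bullet> z))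
        = \<beta> j * ((\<Sum>i\<in>UNIV. (\<alpha> i * k i j) *\<^sub>R hat (p i)) \<bullet> z)"
      by (simp add: inner_sum_left sum_distrib_left mult_ac)
    also have "\<dots> = \<beta> j * (hat (q j) \<bullet> z)" by (simp add: K2)
    finally show ?thesis using Inr by (simp add: Om_mult L_def sum_UNIV_sum)
  qed
qed

end


lemma DIMvec: "DIM(real^'n) = CARD('n::finite)" by simp

definition mkz :: "real \<Rightarrow> real^'d \<Rightarrow> real^('d option)" where
  "mkz c a = (\<chi> l. case l of None \<Rightarrow> c | Some m \<Rightarrow> a $ m)"

lemma mkz_hat: "mkz c a \<bullet> hat x = c + a \<bullet> x"
  by (simp add: mkz_def inner_vec_def sum_option)

lemma mkz_zero: "mkz c a = 0 \<Longrightarrow> a = 0"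
  by (simp add: mkz_def vec_eq_iff) (metis option.simps(5))

context posdep begin

lemma L_lin: "linear L"
  by (rule linearI) (simp_all add: L_def vec_eq_iff inner_add_right)

lemma L_inj: "inj L"
proof (rule injI)
  fix z z' assume "L z = L z'"
  then have "\<And>u. (z - z') \<bullet> hat (bip_config p q u) = 0"
    by (simp add: L_def vec_eq_iff inner_diff_left inner_commute)
  then have "z - z' = 0" by (rule spanning)
  then show "z = z'" by simp
qed

lemma ker_eq: "{y. \<Omega> *v y = 0} = range L"
  using ker_L Om_L by auto

lemma dim_ker: "dim {y. \<Omega> *v y = 0} = CARD('d) + 1"
proof -
  have "dim (L ` UNIV) = dim (UNIV :: (real^('d option)) set)"
    by (rule dim_image_eq[OF L_lin]) (use L_inj in \<open>auto intro: inj_on_subset\<close>)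
  then show ?thesis by (simp add: ker_eq dim_UNIV)
qed

lemma rank_Om: "rank \<Omega> = CARD('a + 'b) - CARD('d) - 1"
proof -
  let ?R = "range ((*v) \<Omega>)"
  have sub: "subspace ?R"
    by (rule linear_subspace_image[OF matrix_vector_mul_linear subspace_UNIV])
  have "dim {y \<in> UNIV. \<forall>x \<in> ?R. orthogonal x y} + dim ?R = dim (UNIV :: (real^('a+'b)) set)"
    by (rule dim_subspace_orthogonal_to_vectors[OF sub subspace_UNIV]) simp
  moreover have "{y \<in> UNIV. \<forall>x \<in> ?R. orthogonal x y} = {y. \<Omega> *v y = 0}"
  proof (intro set_eqI iffI)
    fix y assume "y \<in> {y \<in> UNIV. \<forall>x \<in> ?R. orthogonal x y}"
    then have "orthogonal (\<Omega> *v (\<Omega> *v y)) y" by auto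
    then have "(\<Omega> *v y) \<bullet> (\<Omega> *v y) = 0"
      by (simp add: orthogonal_def inner_sym[OF Om_sym])
    then show "y \<in> {y. \<Omega> *v y = 0}" by simp
  next
    fix y assume "y \<in> {y. \<Omega> *v y = 0}"
    then show "y \<in> {y \<in> UNIV. \<forall>x \<in> ?R. orthogonal x y}"
      by (auto simp: orthogonal_def inner_sym[OF Om_sym, symmetric])
  qed
  ultimately have "dim {y. \<Omega> *v y = 0} + rank \<Omega> = CARD('a + 'b)"
    by (simp add: rank_dim_range dim_UNIV)
  then show ?thesis using dim_ker by simp
qed

lemma no_conic: "\<not> on_conic_at_infinity (bar_vectors Kbip (bip_config p q))"
proof
  assume "on_conic_at_infinity (bar_vectors Kbip (bip_config p q))"
  then obtain Q :: "real^'d^'d" where Qn: "Q \<noteq> 0" and Qs: "transpose Q = Q"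
    and Qv: "\<And>v. v \<in> bar_vectors Kbip (bip_config p q) \<Longrightarrow> v \<bullet> (Q *v v) = 0"
    unfolding on_conic_at_infinity_def by blast
  have symQ: "a \<bullet> (Q *v b) = b \<bullet> (Q *v a)" for a b
    by (metis inner_sym[OF Qs] inner_commute)
  have E: "(p i - q j) \<bullet> (Q *v (p i - q j)) = 0" for i j
  proof -
    have "p i - q j \<in> bar_vectors Kbip (bip_config p q)"
      unfolding bar_vectors_def by (rule CollectI, rule exI[of _ "Inl i"], rule exI[of _ "Inr j"]) simp
    then show ?thesis by (rule Qv)
  qed
  have Ex: "p i \<bullet> (Q *v p i) - 2 * (p i \<bullet> (Q *v q j)) + q j \<bullet> (Q *v q j) = 0" for i j
    using E[of i j] symQ[of "q j" "p i"]
    by (simp add: matrix_vector_right_distrib matrix_vector_mult_diff_distrib inner_diff_left inner_diff_right)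
  have D0: "Q *v (q j' - q j) = 0" for j j'
  proof -
    define a where "a = Q *v (q j' - q j)"
    define c where "c = (q j \<bullet> (Q *v q j) - q j' \<bullet> (Q *v q j')) / 2"
    have "mkz c a \<bullet> hat (p i) = 0" for i
      using Ex[of i j] Ex[of i j'] inner_commute[of "Q *v q j'" "p i"] inner_commute[of "Q *v q j" "p i"]
      by (simp add: mkz_hat a_def c_def matrix_vector_mult_diff_distrib inner_diff_left field_simps)
    then have "mkz c a = 0" by (intro span_p) auto
    then show ?thesis using mkz_zero a_def by blast
  qed
  have "Q $ r = 0" for r
  proof -
    define j0 :: 'b where "j0 = undefined"
    have "mkz (- (Q $ r \<bullet> q j0)) (Q $ r) \<bullet> hat (q j) = 0" for j
    proof -
      have "(Q *v (q j - q j0)) $ r = 0" using D0[of j j0] D0[of j0 j] by simp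
      then show ?thesis unfolding mkz_hat
        by (simp add: matrix_vector_mult_def inner_vec_def algebra_simps sum_subtractf)
    qed
    then have "mkz (- (Q $ r \<bullet> q j0)) (Q $ r) = 0" by (intro span_q) auto
    then show ?thesis by (rule mkz_zero)
  qed
  then have "Q = 0" by (simp add: vec_eq_iff)
  with Qn show False by simp
qed

lemma aff_p: "affine hull (range p) = UNIV"
proof (rule ccontr)
  assume "affine hull (range p) \<noteq> UNIV"
  then have "aff_dim (range p) < int DIM(real^'d)" by (metis aff_dim_lt_full)
  then obtain a b where a: "a \<noteq> 0" and ab: "range p \<subseteq> {x. a \<bullet> x = b}"
    by (rule aff_lowdim_subset_hyperplane)
  have "mkz (-b) a \<bullet> hat (p i) = 0" for i using ab by (auto simp: mkz_hat)
  then have "mkz (-b) a = 0" by (intro span_p) auto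
  then show False using a mkz_zero by blast
qed

lemma aff_q: "affine hull (range q) = UNIV"
proof (rule ccontr)
  assume "affine hull (range q) \<noteq> UNIV"
  then have "aff_dim (range q) < int DIM(real^'d)" by (metis aff_dim_lt_full)
  then obtain a b where a: "a \<noteq> 0" and ab: "range q \<subseteq> {x. a \<bullet> x = b}"
    by (rule aff_lowdim_subset_hyperplane)
  have "mkz (-b) a \<bullet> hat (q i) = 0" for i using ab by (auto simp: mkz_hat)
  then have "mkz (-b) a = 0" by (intro span_q) auto
  then show False using a mkz_zero by blast
qed

lemma result: "super_stable Kbip (bip_config p q) \<and> affine hull (range p) = UNIV \<and> affine hull (range q) = UNIV"
proof (intro conjI aff_p aff_q)
  have "range p \<subseteq> range (bip_config p q)" by (auto intro: range_eqI[of _ _ "Inl _"])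
  then have "affine hull (range (bip_config p q)) = UNIV"
    using aff_p by (metis hull_mono top.extremum_uniqueI)
  then show "super_stable Kbip (bip_config p q)"
    unfolding super_stable_def using equil psd_Om rank_Om no_conic by blast
qed

end


definition Sym :: "(real^'n^'n) set" where "Sym = {X. transpose X = X}"

definition Pset :: "'n set set" where "Pset = {s. card s = 1 \<or> card s = 2}"

definition sb :: "'n set \<Rightarrow> real^'n^'n" where
  "sb s = (\<chi> a b. if {a, b} = s then 1 else 0)"

lemma card_Pset: "card (Pset :: 'n::finite set set) = CARD('n) + (CARD('n) choose 2)"
proof -
  have ns: "card {B::'n set. card B = k} = CARD('n) choose k" for k
    using n_subsets[of "UNIV::'n set" k] by simp
  have "(Pset :: 'n set set) = {B. card B = 1} \<union> {B. card B = 2}"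
    by (auto simp: Pset_def)
  moreover have "card ({B::'n set. card B = 1} \<union> {B. card B = 2})
      = card {B::'n set. card B = 1} + card {B::'n set. card B = 2}"
    by (rule card_Un_disjoint) auto
  ultimately show ?thesis by (simp add: ns)
qed

lemma div2_add: "(x + 2 * y) div 2 = x div 2 + (y::nat)" by simp

lemma dimM_eq: "dimM d = Suc d + (Suc d choose 2)"
proof (induction d)
  case 0 then show ?case by (simp add: dimM_def numeral_2_eq_2)
next
  case (Suc d)
  have "(Suc d + 1) * (Suc d + 2) = (d + 1) * (d + 2) + 2 * (d + 2)" by (simp add: algebra_simps)
  then have "dimM (Suc d) = dimM d + (d + 2)" unfolding dimM_def by (simp only: div2_add)
  also have "\<dots> = Suc (Suc d) + (Suc (Suc d) choose 2)" using Suc by (simp add: numeral_2_eq_2)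
  finally show ?case .
qed

lemma dimM_ge3: "1 \<le> d \<Longrightarrow> 3 \<le> dimM d"
proof -
  assume "1 \<le> d"
  then have "6 \<le> (d + 1) * (d + 2)" using mult_le_mono[of 2 "d+1" 3 "d+2"] by simp
  then have "6 div 2 \<le> (d + 1) * (d + 2) div 2" by (rule div_le_mono)
  then show ?thesis by (simp add: dimM_def)
qed

lemma Sym_span: "(Sym :: (real^'n::finite^'n) set) \<subseteq> span (sb ` Pset)"
proof
  fix X :: "real^'n^'n" assume "X \<in> Sym"
  then have tX: "transpose X = X" by (simp add: Sym_def)
  have XS: "X $ i $ j = X $ j $ i" for i j
  proof -
    have "X $ i $ j = transpose X $ i $ j" by (simp add: tX)
    also have "\<dots> = X $ j $ i" by (simp add: transpose_def)
    finally show ?thesis .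
  qed
  define cf where "cf s = X $ fst (SOME pr. {fst pr, snd pr} = s) $ snd (SOME pr. {fst pr, snd pr} = s)" for s :: "'n set"
  have cf: "cf {a, b} = X $ a $ b" for a b
  proof -
    have "\<exists>pr. {fst pr, snd pr} = {a, b}" by (rule exI[of _ "(a, b)"]) simp
    then have "{fst (SOME pr. {fst pr, snd pr} = {a, b}), snd (SOME pr. {fst pr, snd pr} = {a, b})} = {a, b}"
      by (rule someI_ex)
    then show ?thesis unfolding cf_def doubleton_eq_iff using XS by auto
  qed
  have ab: "{a, b} \<in> Pset" for a b :: 'n
    by (cases "a = b") (auto simp: Pset_def)
  have "X = (\<Sum>s\<in>Pset. cf s *\<^sub>R sb s)"
  proof (rule vec_eq_iff[THEN iffD2], rule allI, rule vec_eq_iff[THEN iffD2], rule allI)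
    fix a b
    have "(\<Sum>s\<in>Pset. cf s *\<^sub>R sb s) $ a $ b = (\<Sum>s\<in>Pset. if {a, b} = s then cf s else 0)"
      by (simp add: sb_def if_distrib[of "\<lambda>t. cf _ * t"] cong: if_cong)
    also have "\<dots> = cf {a, b}" using ab[of a b] by (simp add: sum.delta)
    finally show "X $ a $ b = (\<Sum>s\<in>Pset. cf s *\<^sub>R sb s) $ a $ b" by (simp add: cf)
  qed
  also have "\<dots> \<in> span (sb ` Pset)"
    by (intro span_sum span_scale span_base imageI)
  finally show "X \<in> span (sb ` Pset)" .
qed

lemma dim_Sym: "dim (Sym :: (real^('d::finite option)^('d option)) set) \<le> dimM CARD('d)"
proof -
  have "dim (Sym :: (real^('d option)^('d option)) set) \<le> card (sb ` (Pset :: 'd option set set))"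
    by (rule dim_le_card[OF Sym_span]) simp
  also have "\<dots> \<le> card (Pset :: 'd option set set)" by (rule card_image_le) simp
  also have "\<dots> = dimM CARD('d)" by (simp add: card_Pset dimM_eq)
  finally show ?thesis .
qed

lemma VV_sym: "VV x \<in> Sym"
  by (simp add: Sym_def vec_eq_iff transpose_def mult.commute)

lemma dot_vm:
  fixes A :: "real^'n^'n"
  shows "x \<bullet> (A *v y) = y \<bullet> (x v* A)"
  by (simp add: inner_vec_def matrix_vector_mult_def vector_matrix_mult_def sum_distrib_left sum_distrib_right mult_ac)
     (rule sum.swap)

lemma quad_transpose:
  fixes A :: "real^'n^'n"
  shows "x \<bullet> (transpose A *v x) = x \<bullet> (A *v x)"
  by (simp add: transpose_matrix_vector dot_vm[of x A x])

lemma hat_nz: "hat x \<bullet> hat x > 0"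
proof -
  have "hat x \<noteq> 0" by (metis hat_None zero_index zero_neq_one)
  then show ?thesis by simp
qed



lemma mat_neg_mult: "(- mat 1 :: real^'n^'n) *v x = - x"
proof -
  have "(- mat 1 :: real^'n^'n) *v x = - (mat 1 *v x)"
    by (simp add: vec_eq_iff matrix_vector_mult_def sum_negf)
  then show ?thesis by simp
qed

lemma transpose_neg_mat: "transpose (- mat 1 :: real^'n^'n) = - mat 1"
  by (simp add: vec_eq_iff transpose_def mat_def)

lemma smv: "((c::real) *\<^sub>R (A::real^'n^'m)) *v x = c *\<^sub>R (A *v x)"
  by (simp add: vec_eq_iff matrix_vector_mult_def sum_distrib_left mult_ac)

locale hyp =
  fixes p :: "'a::finite \<Rightarrow> real^'d" and q :: "'b::finite \<Rightarrow> real^'d"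
    and I :: "'a set" and J :: "'b set"
  assumes gp: "quadric_general_position (bip_config p q) (I <+> J)"
    and ns: "\<not> strictly_separated_by_quadric (p ` I) (q ` J)"
begin

abbreviation "r \<equiv> bip_config p q"

lemma dimM_ge: "3 \<le> dimM CARD('d)"
  by (rule dimM_ge3) (simp add: Suc_leI)

lemma gp_aff: "T \<subseteq> I <+> J \<Longrightarrow> card T = k + 1 \<Longrightarrow> 1 \<le> k \<Longrightarrow> k \<le> dimM CARD('d) - 1
   \<Longrightarrow> aff_dim (VV ` r ` T) = int k"
  using gp unfolding quadric_general_position_def by (meson finite)

lemma gp_inj: "inj_on (\<lambda>u. VV (r u)) (I <+> J)"
proof (rule inj_onI, rule ccontr)
  fix s t assume s: "s \<in> I <+> J" and t: "t \<in> I <+> J" and e: "VV (r s) = VV (r t)" and st: "s \<noteq> t"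
  have "aff_dim (VV ` r ` {s, t}) = int 1"
    by (rule gp_aff) (use s t st dimM_ge in auto)
  moreover have "VV ` r ` {s, t} = {VV (r s)}" using e by auto
  ultimately show False by simp
qed

lemma I_ne: "I \<noteq> {}"
proof
  assume "I = {}"
  have "strictly_separated_by_quadric (p ` I) (q ` J)"
    unfolding strictly_separated_by_quadric_def
  proof (intro exI conjI ballI)
    show "transpose (- mat 1 :: real^('d option)^('d option)) = - mat 1"
      by (rule transpose_neg_mat)
    fix b assume "b \<in> q ` J"
    show "hat b \<bullet> ((- mat 1) *v hat b) < 0"
      using hat_nz[of b] by (simp add: mat_neg_mult)
  qed (use \<open>I = {}\<close> in auto)
  with ns show False by simp
qed

lemma J_ne: "J \<noteq> {}"
proof
  assume "J = {}"
  have "strictly_separated_by_quadric (p ` I) (q ` J)"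
    unfolding strictly_separated_by_quadric_def
  proof (intro exI conjI ballI)
    show "transpose (mat 1 :: real^('d option)^('d option)) = mat 1"
      by (rule transpose_mat)
    fix a assume "a \<in> p ` I"
    show "0 < hat a \<bullet> (mat 1 *v hat a)"
      using hat_nz[of a] by simp
  qed (use \<open>J = {}\<close> in auto)
  with ns show False by simp
qed

definition Ecorner :: "real^('d option)^('d option)" where
  "Ecorner = (\<chi> i j. if i = None \<and> j = None then 1 else 0)"

lemma Ecorner_quad: "hat x \<bullet> (Ecorner *v hat x) = 1"
  by (simp add: Ecorner_def inner_vec_def matrix_vector_mult_def sum_option)

lemma conv_meet: "convex hull (VV ` p ` I) \<inter> convex hull (VV ` q ` J) \<noteq> {}"
proof
  assume disj: "convex hull (VV ` p ` I) \<inter> convex hull (VV ` q ` J) = {}"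
  have c1: "convex (convex hull (VV ` q ` J))" by simp
  have c2: "closed (convex hull (VV ` q ` J))"
    by (simp add: compact_imp_closed finite_imp_compact_convex_hull)
  have c3: "convex (convex hull (VV ` p ` I))" by simp
  have c4: "compact (convex hull (VV ` p ` I))" by (simp add: finite_imp_compact_convex_hull)
  have c5: "convex hull (VV ` p ` I) \<noteq> {}" using I_ne by simp
  have c6: "convex hull (VV ` q ` J) \<inter> convex hull (VV ` p ` I) = {}" using disj by blast
  obtain a b where aS: "\<forall>x\<in>convex hull (VV ` q ` J). a \<bullet> x < b"
    and aT: "\<forall>x\<in>convex hull (VV ` p ` I). b < a \<bullet> x"
    using separating_hyperplane_closed_compact[OF c1 c2 c3 c4 c5 c6] by blast
  define M where "M = (1/2::real) *\<^sub>R (a + transpose a) - b *\<^sub>R Ecorner"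
  have Mq: "hat x \<bullet> (M *v hat x) = a \<bullet> VV x - b" for x
  proof -
    have "hat x \<bullet> (M *v hat x) = (1/2) * (hat x \<bullet> (a *v hat x) + hat x \<bullet> (transpose a *v hat x)) - b * (hat x \<bullet> (Ecorner *v hat x))"
      by (simp add: M_def matrix_vector_mult_diff_rdistrib matrix_vector_mult_add_rdistrib smv
          inner_diff_right inner_add_right)
    also have "\<dots> = a \<bullet> VV x - b" unfolding quad_transpose Ecorner_quad by (simp add: quad_VV)
    finally show ?thesis .
  qed
  have "strictly_separated_by_quadric (p ` I) (q ` J)"
    unfolding strictly_separated_by_quadric_def
  proof (intro exI conjI ballI)
    show "transpose M = M"
      by (simp add: M_def vec_eq_iff transpose_def Ecorner_def)
    fix x assume "x \<in> p ` I"
    then have "VV x \<in> convex hull (VV ` p ` I)" by (simp add: hull_inc)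
    then show "0 < hat x \<bullet> (M *v hat x)" using aT by (simp add: Mq)
  next
    fix x assume "x \<in> q ` J"
    then have "VV x \<in> convex hull (VV ` q ` J)" by (simp add: hull_inc)
    then show "hat x \<bullet> (M *v hat x) < 0" using aS by (simp add: Mq)
  qed
  with ns show False by simp
qed

end


context hyp begin

lemma dep_nonneg: "\<exists>\<gamma> :: 'a + 'b \<Rightarrow> real. (\<forall>u. \<gamma> u \<noteq> 0 \<longrightarrow> u \<in> I <+> J) \<and> (\<forall>i. 0 \<le> \<gamma> (Inl i))
   \<and> (\<forall>j. \<gamma> (Inr j) \<le> 0) \<and> sum \<gamma> UNIV = 0 \<and> (\<Sum>u\<in>UNIV. \<gamma> u *\<^sub>R VV (r u)) = 0 \<and> (\<exists>u. \<gamma> u \<noteq> 0)"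
proof -
  obtain X where XP: "X \<in> convex hull (VV ` p ` I)" and XQ: "X \<in> convex hull (VV ` q ` J)"
    using conv_meet by blast
  have injP: "inj_on (\<lambda>i. VV (p i)) I"
    using gp_inj unfolding inj_on_def by (metis InlI bip_Inl sum.inject(1))
  have injQ: "inj_on (\<lambda>j. VV (q j)) J"
    using gp_inj unfolding inj_on_def by (metis InrI bip_Inr sum.inject(2))
  have imP: "VV ` p ` I = (\<lambda>i. VV (p i)) ` I" and imQ: "VV ` q ` J = (\<lambda>j. VV (q j)) ` J" by auto
  obtain u where u0: "\<forall>x\<in>VV ` p ` I. 0 \<le> u x" and u1: "sum u (VV ` p ` I) = 1"
    and uX: "(\<Sum>x\<in>VV ` p ` I. u x *\<^sub>R x) = X"
    using XP by (auto simp: convex_hull_finite)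
  obtain v where v0: "\<forall>x\<in>VV ` q ` J. 0 \<le> v x" and v1: "sum v (VV ` q ` J) = 1"
    and vX: "(\<Sum>x\<in>VV ` q ` J. v x *\<^sub>R x) = X"
    using XQ by (auto simp: convex_hull_finite)
  define \<alpha> where "\<alpha> i = (if i \<in> I then u (VV (p i)) else 0)" for i
  define \<beta> where "\<beta> j = (if j \<in> J then v (VV (q j)) else 0)" for j
  have sa: "sum \<alpha> UNIV = 1"
  proof -
    have "sum \<alpha> UNIV = (\<Sum>i\<in>I. u (VV (p i)))"
      unfolding \<alpha>_def by (simp add: sum.If_cases)
    also have "\<dots> = 1" using u1 unfolding imP sum.reindex[OF injP] by (simp add: comp_def)
    finally show ?thesis .
  qed
  have sb: "sum \<beta> UNIV = 1"
  proof -
    have "sum \<beta> UNIV = (\<Sum>j\<in>J. v (VV (q j)))"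
      unfolding \<beta>_def by (simp add: sum.If_cases)
    also have "\<dots> = 1" using v1 unfolding imQ sum.reindex[OF injQ] by (simp add: comp_def)
    finally show ?thesis .
  qed
  have xa: "(\<Sum>i\<in>UNIV. \<alpha> i *\<^sub>R VV (p i)) = X"
  proof -
    have "(\<Sum>i\<in>UNIV. \<alpha> i *\<^sub>R VV (p i)) = (\<Sum>i\<in>I. u (VV (p i)) *\<^sub>R VV (p i))"
      unfolding \<alpha>_def by (simp add: if_distrib[of "\<lambda>t. t *\<^sub>R _"] sum.If_cases cong: if_cong)
    also have "\<dots> = X" using uX unfolding imP sum.reindex[OF injP] by (simp add: comp_def)
    finally show ?thesis .
  qed
  have xb: "(\<Sum>j\<in>UNIV. \<beta> j *\<^sub>R VV (q j)) = X"
  proof -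
    have "(\<Sum>j\<in>UNIV. \<beta> j *\<^sub>R VV (q j)) = (\<Sum>j\<in>J. v (VV (q j)) *\<^sub>R VV (q j))"
      unfolding \<beta>_def by (simp add: if_distrib[of "\<lambda>t. t *\<^sub>R _"] sum.If_cases cong: if_cong)
    also have "\<dots> = X" using vX unfolding imQ sum.reindex[OF injQ] by (simp add: comp_def)
    finally show ?thesis .
  qed
  define \<gamma> where "\<gamma> = case_sum \<alpha> (\<lambda>j. - \<beta> j)"
  show ?thesis
  proof (intro exI[of _ \<gamma>] conjI allI impI)
    fix w assume "\<gamma> w \<noteq> 0" then show "w \<in> I <+> J"
      by (cases w) (auto simp: \<gamma>_def \<alpha>_def \<beta>_def split: if_splits)
  next
    fix i show "0 \<le> \<gamma> (Inl i)" using u0 by (simp add: \<gamma>_def \<alpha>_def)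
  next
    fix j show "\<gamma> (Inr j) \<le> 0" using v0 by (simp add: \<gamma>_def \<beta>_def)
  next
    show "sum \<gamma> UNIV = 0" using sa sb by (simp add: sum_UNIV_sum \<gamma>_def sum_negf)
  next
    show "(\<Sum>u\<in>UNIV. \<gamma> u *\<^sub>R VV (r u)) = 0" using xa xb
      by (simp add: sum_UNIV_sum \<gamma>_def sum_negf)
  next
    obtain i where "\<alpha> i \<noteq> 0" using sa by (metis sum.neutral zero_neq_one)
    then show "\<exists>u. \<gamma> u \<noteq> 0" by (intro exI[of _ "Inl i"]) (simp add: \<gamma>_def)
  qed
qed

end


lemma corner_VV_img: "Y \<in> VV ` A \<Longrightarrow> Y $ None $ None = 1" by auto

lemma affdep_img:
  assumes inj: "inj_on h S" and fin: "finite S"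
    and s0: "sum g S = 0" and nz: "\<exists>u\<in>S. g u \<noteq> 0" and s1: "(\<Sum>u\<in>S. g u *\<^sub>R h u) = 0"
  shows "affine_dependent (h ` S)"
proof -
  define U where "U Y = g (inv_into S h Y)" for Y
  have a: "sum U (h ` S) = 0" using s0 unfolding sum.reindex[OF inj] by (simp add: U_def comp_def inv_into_f_f[OF inj])
  have b: "\<exists>v\<in>h ` S. U v \<noteq> 0" using nz by (auto simp: U_def inv_into_f_f[OF inj])
  have c: "(\<Sum>v\<in>h ` S. U v *\<^sub>R v) = 0" using s1 unfolding sum.reindex[OF inj] by (simp add: U_def comp_def inv_into_f_f[OF inj])
  show ?thesis using a b c fin by (auto simp: affine_dependent_explicit_finite)
qed

context hyp begin

lemma inj_sub: "T \<subseteq> I <+> J \<Longrightarrow> inj_on (\<lambda>u. VV (r u)) T"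
  using gp_inj inj_on_subset by blast

lemma indep_gp:
  assumes T: "T \<subseteq> I <+> J" and c2: "2 \<le> card T" and cM: "card T \<le> dimM CARD('d)"
  shows "\<not> affine_dependent ((\<lambda>u. VV (r u)) ` T)"
proof -
  have "aff_dim (VV ` r ` T) = int (card T - 1)"
    by (rule gp_aff[OF T]) (use c2 cM in auto)
  moreover have "card ((\<lambda>u. VV (r u)) ` T) = card T" by (rule card_image[OF inj_sub[OF T]])
  moreover have "VV ` r ` T = (\<lambda>u. VV (r u)) ` T" by auto
  ultimately show ?thesis using c2 by (simp add: affine_independent_iff_card of_nat_diff)
qed

lemma cardS:
  fixes \<gamma> :: "'a + 'b \<Rightarrow> real"
  assumes sup: "\<forall>u. \<gamma> u \<noteq> 0 \<longrightarrow> u \<in> I <+> J" and s0: "sum \<gamma> UNIV = 0"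
    and s1: "(\<Sum>u\<in>UNIV. \<gamma> u *\<^sub>R VV (r u)) = 0" and nz: "\<exists>u. \<gamma> u \<noteq> 0"
  shows "dimM CARD('d) + 1 \<le> card {u. \<gamma> u \<noteq> 0}"
proof (rule ccontr)
  define S where "S = {u. \<gamma> u \<noteq> 0}"
  assume "\<not> dimM CARD('d) + 1 \<le> card {u. \<gamma> u \<noteq> 0}"
  then have cS: "card S \<le> dimM CARD('d)" by (simp add: S_def)
  have SIJ: "S \<subseteq> I <+> J" using sup by (auto simp: S_def)
  have "sum \<gamma> UNIV = sum \<gamma> S" by (rule sum.mono_neutral_right) (auto simp: S_def)
  then have e0: "sum \<gamma> S = 0" using s0 by simp
  have "(\<Sum>u\<in>UNIV. \<gamma> u *\<^sub>R VV (r u)) = (\<Sum>u\<in>S. \<gamma> u *\<^sub>R VV (r u))"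
    by (rule sum.mono_neutral_right) (auto simp: S_def)
  then have e1: "(\<Sum>u\<in>S. \<gamma> u *\<^sub>R VV (r u)) = 0" using s1 by simp
  obtain u0 where u0: "u0 \<in> S" using nz by (auto simp: S_def)
  have fS: "finite S" by (rule finite)
  have "card S \<noteq> 0"
  proof
    assume "card S = 0"
    then have "S = {}" using fS by simp
    with u0 show False by blast
  qed
  moreover have "card S \<noteq> 1"
  proof
    assume "card S = 1"
    then obtain x where Sx: "S = {x}" by (rule card_1_singletonE)
    then have "x \<in> S" by simp
    then have "\<gamma> x \<noteq> 0" by (simp add: S_def)
    moreover have "sum \<gamma> S = \<gamma> x" using Sx by simp
    ultimately show False using e0 by simp
  qed
  ultimately have c2: "2 \<le> card S" by linarith
  have "\<not> affine_dependent ((\<lambda>u. VV (r u)) ` S)" by (rule indep_gp[OF SIJ c2 cS])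
  moreover have "affine_dependent ((\<lambda>u. VV (r u)) ` S)"
    by (rule affdep_img[OF inj_sub[OF SIJ] finite e0 _ e1]) (use u0 in \<open>auto simp: S_def\<close>)
  ultimately show False by simp
qed

lemma span_T:
  assumes T: "T \<subseteq> I <+> J" and cT: "card T = dimM CARD('d)"
  shows "VV x \<in> span ((\<lambda>u. VV (r u)) ` T)"
proof -
  let ?B = "(\<lambda>u. VV (r u)) ` T"
  have ai: "\<not> affine_dependent ?B" by (rule indep_gp[OF T]) (use cT dimM_ge in auto)
  have ind: "\<not> dependent ?B"
  proof
    assume "dependent ?B"
    then obtain c where c1: "\<exists>v\<in>?B. c v \<noteq> 0" and c2: "(\<Sum>v\<in>?B. c v *\<^sub>R v) = 0"
      by (auto simp: dependent_finite)
    have "(\<Sum>v\<in>?B. c v *\<^sub>R v) $ None $ None = sum c ?B"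
      by (auto intro: sum.cong)
    then have "sum c ?B = 0" using c2 by simp
    then have "affine_dependent ?B" using c1 c2 by (auto simp: affine_dependent_explicit_finite)
    with ai show False by simp
  qed
  have "(Sym :: (real^('d option)^('d option)) set) \<subseteq> span ?B"
  proof (rule card_ge_dim_independent)
    show "?B \<subseteq> Sym" using VV_sym by auto
    show "independent ?B" by (rule ind)
    have "card ?B = card T" by (rule card_image[OF inj_sub[OF T]])
    then show "dim (Sym :: (real^('d option)^('d option)) set) \<le> card ?B"
      using dim_Sym cT by simp
  qed
  then show ?thesis using VV_sym by auto
qed

lemma spanning_T:
  assumes T: "T \<subseteq> I <+> J" and cT: "card T = dimM CARD('d)"
    and z: "\<And>u. z \<bullet> hat (r u) = 0"
  shows "z = 0"
proof -
  let ?K = "{X :: real^('d option)^('d option). X *v z = 0}"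
  have lin: "linear (\<lambda>X :: real^('d option)^('d option). X *v z)"
    by (rule linearI) (simp_all add: matrix_vector_mult_add_rdistrib smv)
  have sub: "subspace ?K" using linear_subspace_kernel[OF lin] by simp
  have "(\<lambda>u. VV (r u)) ` T \<subseteq> ?K" using z by (auto simp: VV_mult inner_commute)
  then have "span ((\<lambda>u. VV (r u)) ` T) \<subseteq> ?K" by (rule span_minimal[OF _ sub])
  then have "VV x *v z = 0" for x using span_T[OF T cT, of x] by auto
  then have "(hat x \<bullet> z) *\<^sub>R hat x = 0" for x by (simp add: VV_mult)
  then have "z \<bullet> hat x = 0" for x using hat_nz[of x] by (auto simp: inner_commute)
  then show "z = 0" by (rule hat_zero)
qed

end


context hyp begin

lemma main_hyp: "\<exists>\<alpha> \<beta>. posdep p q \<alpha> \<beta> \<and> dimM CARD('d) + 1 \<le> CARD('a) + CARD('b)"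
proof -
  obtain \<gamma> :: "'a + 'b \<Rightarrow> real" where sup: "\<forall>u. \<gamma> u \<noteq> 0 \<longrightarrow> u \<in> I <+> J"
    and gl: "\<forall>i. 0 \<le> \<gamma> (Inl i)" and gr: "\<forall>j. \<gamma> (Inr j) \<le> 0"
    and s0: "sum \<gamma> UNIV = 0" and s1: "(\<Sum>u\<in>UNIV. \<gamma> u *\<^sub>R VV (r u)) = 0" and nz: "\<exists>u. \<gamma> u \<noteq> 0"
    using dep_nonneg by blast
  define S where "S = {u. \<gamma> u \<noteq> 0}"
  have cS: "dimM CARD('d) + 1 \<le> card S" unfolding S_def by (rule cardS[OF sup s0 s1 nz])
  have "card S \<le> card (UNIV :: ('a + 'b) set)" by (rule card_mono) auto
  then have count: "dimM CARD('d) + 1 \<le> CARD('a) + CARD('b)" using cS by (simp add: card_sum)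
  obtain T where TS: "T \<subseteq> S" and cT: "card T = dimM CARD('d)" and fT: "finite T"
    using obtain_subset_with_card_n[of "dimM CARD('d)" S] cS by auto
  have TIJ: "T \<subseteq> I <+> J" using TS sup by (auto simp: S_def)
  let ?V = "\<lambda>u. VV (r u)"
  have "\<forall>u. \<exists>c. ?V u = (\<Sum>t\<in>T. c t *\<^sub>R ?V t)"
  proof
    fix u
    have "?V u \<in> span (?V ` T)" by (rule span_T[OF TIJ cT])
    then obtain c where "?V u = (\<Sum>v\<in>?V ` T. c v *\<^sub>R v)"
      using span_finite[of "?V ` T"] fT by auto
    also have "\<dots> = (\<Sum>t\<in>T. c (?V t) *\<^sub>R ?V t)"
      by (simp add: sum.reindex[OF inj_sub[OF TIJ]] comp_def)
    finally have e: "?V u = (\<Sum>t\<in>T. c (?V t) *\<^sub>R ?V t)" .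
    show "\<exists>c. ?V u = (\<Sum>t\<in>T. c t *\<^sub>R ?V t)" by (rule exI[of _ "\<lambda>t. c (?V t)"]) (rule e)
  qed
  then obtain C where C: "\<And>u. ?V u = (\<Sum>t\<in>T. C u t *\<^sub>R ?V t)" by metis
  have sumC: "sum (C u) T = 1" for u
  proof -
    have "1 = ?V u $ None $ None" by simp
    also have "\<dots> = (\<Sum>t\<in>T. C u t)" by (subst C) simp
    finally show ?thesis by simp
  qed
  define \<sigma> :: "'a + 'b \<Rightarrow> real" where "\<sigma> u = (case u of Inl _ \<Rightarrow> 1 | Inr _ \<Rightarrow> -1)" for u
  define \<delta> where "\<delta> w = (\<Sum>u\<in>UNIV. \<sigma> u * ((if w = u then 1 else 0) - (if w \<in> T then C u w else 0)))" for w
  have \<delta>_out: "\<delta> w = \<sigma> w" if "w \<notin> T" for w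
  proof -
    have "\<delta> w = (\<Sum>u\<in>UNIV. if w = u then \<sigma> u else 0)"
      unfolding \<delta>_def using that by (intro sum.cong) auto
    then show ?thesis by simp
  qed
  have inner_u: "(\<Sum>w\<in>UNIV. ((if w = u then 1 else 0) - (if w \<in> T then C u w else 0)) *\<^sub>R ?V w) = 0" for u
  proof -
    have a: "(\<Sum>w\<in>UNIV. (if w = u then 1 else 0) *\<^sub>R ?V w) = ?V u"
      by (simp add: if_distrib[of "\<lambda>t. t *\<^sub>R _"] cong: if_cong)
    have "(\<Sum>w\<in>UNIV. (if w \<in> T then C u w else 0) *\<^sub>R ?V w) = (\<Sum>w\<in>UNIV. if w \<in> T then C u w *\<^sub>R ?V w else 0)"
      by (rule sum.cong) auto
    also have "\<dots> = (\<Sum>w\<in>T. C u w *\<^sub>R ?V w)" by (simp add: sum.If_cases)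
    finally have b: "(\<Sum>w\<in>UNIV. (if w \<in> T then C u w else 0) *\<^sub>R ?V w) = ?V u" using C[of u] by simp
    show ?thesis using a b by (simp add: scaleR_left_diff_distrib sum_subtractf)
  qed
  have \<delta>_dep: "(\<Sum>w\<in>UNIV. \<delta> w *\<^sub>R ?V w) = 0"
  proof -
    have "(\<Sum>w\<in>UNIV. \<delta> w *\<^sub>R ?V w)
        = (\<Sum>w\<in>UNIV. \<Sum>u\<in>UNIV. \<sigma> u *\<^sub>R (((if w = u then 1 else 0) - (if w \<in> T then C u w else 0)) *\<^sub>R ?V w))"
      unfolding \<delta>_def by (simp add: scaleR_sum_left)
    also have "\<dots> = (\<Sum>u\<in>UNIV. \<Sum>w\<in>UNIV. \<sigma> u *\<^sub>R (((if w = u then 1 else 0) - (if w \<in> T then C u w else 0)) *\<^sub>R ?V w))"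
      by (rule sum.swap)
    also have "\<dots> = (\<Sum>u\<in>UNIV. \<sigma> u *\<^sub>R (\<Sum>w\<in>UNIV. ((if w = u then 1 else 0) - (if w \<in> T then C u w else 0)) *\<^sub>R ?V w))"
      by (simp add: scaleR_sum_right)
    also have "\<dots> = 0" by (simp add: inner_u)
    finally show ?thesis .
  qed
  have \<delta>_sum: "sum \<delta> UNIV = 0"
  proof -
    have "sum \<delta> UNIV = (\<Sum>u\<in>UNIV. \<Sum>w\<in>UNIV. \<sigma> u * ((if w = u then 1 else 0) - (if w \<in> T then C u w else 0)))"
      unfolding \<delta>_def by (rule sum.swap)
    also have "\<dots> = (\<Sum>u\<in>UNIV. \<sigma> u * (\<Sum>w\<in>UNIV. ((if w = u then 1 else 0) - (if w \<in> T then C u w else 0))))"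
      by (simp add: sum_distrib_left)
    also have "(\<Sum>w\<in>UNIV. ((if w = u then 1 else 0) - (if w \<in> T then C u w else 0))) = 0" for u
    proof -
      have "(\<Sum>w\<in>UNIV. (if w \<in> T then C u w else 0)) = sum (C u) T" by (simp add: sum.If_cases)
      then show ?thesis using sumC[of u] by (simp add: sum_subtractf)
    qed
    then have "(\<Sum>u\<in>UNIV. \<sigma> u * (\<Sum>w\<in>UNIV. ((if w = u then 1 else 0) - (if w \<in> T then C u w else 0)))) = 0"
      by simp
    finally show ?thesis .
  qed
  have Tne: "T \<noteq> {}" using cT dimM_ge by auto
  define \<epsilon> where "\<epsilon> = Min ((\<lambda>w. \<bar>\<gamma> w\<bar> / (1 + \<bar>\<delta> w\<bar>)) ` T)"
  have gT: "\<gamma> w \<noteq> 0" if "w \<in> T" for w using that TS by (auto simp: S_def)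
  have epos: "0 < \<epsilon>"
    unfolding \<epsilon>_def using fT Tne gT
    by (subst Min_gr_iff) (auto intro!: divide_pos_pos simp: add_pos_nonneg)
  have ele: "\<epsilon> * \<bar>\<delta> w\<bar> < \<bar>\<gamma> w\<bar>" if "w \<in> T" for w
  proof -
    have "\<epsilon> \<le> \<bar>\<gamma> w\<bar> / (1 + \<bar>\<delta> w\<bar>)" unfolding \<epsilon>_def using fT that by (intro Min_le) auto
    then have "\<epsilon> * (1 + \<bar>\<delta> w\<bar>) \<le> \<bar>\<gamma> w\<bar>" by (simp add: pos_le_divide_eq add_pos_nonneg)
    then show ?thesis using epos by (simp add: algebra_simps)
  qed
  have edl: "- (\<epsilon> * \<bar>\<delta> w\<bar>) \<le> \<epsilon> * \<delta> w" for w
  proof -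
    have "- \<bar>\<delta> w\<bar> \<le> \<delta> w" by simp
    then have "\<epsilon> * (- \<bar>\<delta> w\<bar>) \<le> \<epsilon> * \<delta> w" using epos by (intro mult_left_mono) auto
    then show ?thesis by simp
  qed
  have edr: "\<epsilon> * \<delta> w \<le> \<epsilon> * \<bar>\<delta> w\<bar>" for w
  proof -
    have "\<delta> w \<le> \<bar>\<delta> w\<bar>" by simp
    then show ?thesis using epos by (intro mult_left_mono) auto
  qed
  define \<alpha> where "\<alpha> i = \<gamma> (Inl i) + \<epsilon> * \<delta> (Inl i)" for i
  define \<beta> where "\<beta> j = - (\<gamma> (Inr j) + \<epsilon> * \<delta> (Inr j))" for j
  have apos: "0 < \<alpha> i" for i
  proof (cases "Inl i \<in> T")
    case True
    then have "0 < \<gamma> (Inl i)" using gl gT[OF True] by (metis order_le_less)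
    then show ?thesis using ele[OF True] edl[of "Inl i"] by (simp add: \<alpha>_def)
  next
    case False
    then show ?thesis using gl epos \<delta>_out[OF False] by (simp add: \<alpha>_def \<sigma>_def add_nonneg_pos)
  qed
  have bpos: "0 < \<beta> j" for j
  proof (cases "Inr j \<in> T")
    case True
    then have "\<gamma> (Inr j) < 0" using gr gT[OF True] by (metis order_le_less)
    then show ?thesis using ele[OF True] edr[of "Inr j"] by (simp add: \<beta>_def)
  next
    case False
    have "\<gamma> (Inr j) \<le> 0" using gr by blast
    then show ?thesis using epos \<delta>_out[OF False] by (simp add: \<beta>_def \<sigma>_def)
  qed
  have tot: "(\<Sum>u\<in>UNIV. (\<gamma> u + \<epsilon> * \<delta> u) *\<^sub>R ?V u) = 0"
  proof -
    have "(\<Sum>u\<in>UNIV. (\<epsilon> * \<delta> u) *\<^sub>R ?V u) = \<epsilon> *\<^sub>R (\<Sum>u\<in>UNIV. \<delta> u *\<^sub>R ?V u)"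
      by (simp add: scaleR_sum_right)
    then show ?thesis using s1 \<delta>_dep by (simp add: scaleR_add_left sum.distrib)
  qed
  have dep: "(\<Sum>i\<in>UNIV. \<alpha> i *\<^sub>R VV (p i)) = (\<Sum>j\<in>UNIV. \<beta> j *\<^sub>R VV (q j))"
  proof -
    have "(\<Sum>i\<in>UNIV. \<alpha> i *\<^sub>R VV (p i)) + (\<Sum>j\<in>UNIV. (- \<beta> j) *\<^sub>R VV (q j)) = 0"
      using tot by (simp add: sum_UNIV_sum \<alpha>_def \<beta>_def add.commute)
    then show ?thesis by (simp add: sum_negf eq_neg_iff_add_eq_0[symmetric])
  qed
  have "posdep p q \<alpha> \<beta>"
  proof
    show "\<And>i. 0 < \<alpha> i" by (rule apos)
    show "\<And>j. 0 < \<beta> j" by (rule bpos)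
    show "(\<Sum>i\<in>UNIV. \<alpha> i *\<^sub>R VV (p i)) = (\<Sum>j\<in>UNIV. \<beta> j *\<^sub>R VV (q j))" by (rule dep)
    show "\<And>z. (\<And>u. z \<bullet> hat (r u) = 0) \<Longrightarrow> z = 0" by (rule spanning_T[OF TIJ cT])
  qed
  then show ?thesis using count by blast
qed

end

theorem mainTheorem6:
  fixes p :: "'a::finite \<Rightarrow> real^'d" and q :: "'b::finite \<Rightarrow> real^'d"
    and I :: "'a set" and J :: "'b set"
  assumes "quadric_general_position (bip_config p q) (I <+> J)"
    and "\<not> strictly_separated_by_quadric (p ` I) (q ` J)"
  shows "super_stable Kbip (bip_config p q)
         \<and> CARD('a) + CARD('b) \<ge> dimM CARD('d) + 1
         \<and> affine hull (range p) = affine hull (range q)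
         \<and> affine hull (range q) = UNIV"
proof -
  interpret hyp p q I J by unfold_locales (use assms in auto)
  obtain \<alpha> \<beta> where pd: "posdep p q \<alpha> \<beta>" and cnt: "dimM CARD('d) + 1 \<le> CARD('a) + CARD('b)"
    using main_hyp by blast
  interpret pd: posdep p q \<alpha> \<beta> by (rule pd)
  show ?thesis using pd.result cnt by simp
qed

end
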